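(* Suppose the budget and utility parameters of users are drawn i.i.d. from a distribution $\mathcal{D}$ such that (i) for each good $j$, $\mathbb{P}_{\mathcal{D}}(u_j>0)>0$, and (ii) the support satisfies $\mathbf{u}\in[\underline{\mathbf{u}},\bar{\mathbf{u}}]$ and $w\in[\underline w,\bar w]$ with $\underline{u},\underline w>0$. Let $\boldsymbol{\pi}$ be the revealed preference pricing policy described below, with allocations $\mathbf{x}_1,\dots,\mathbf{x}_n$. Then for step size $\gamma=\gamma_t=\bar D/\sqrt{n}$ for all $t\in[n]$, for some constant $\bar D>0$, the expected regret satisfies $R_n(\boldsymbol{\pi})\le O(\sqrt n)$ and the expected constraint violation satisfies $V_n(\boldsymbol{\pi})\le O(\sqrt n)$.
   Context: Online Fisher market: $m$ divisible goods, good $j$ with capacity $c_j=nd_j$, $\mathbf{d}>\mathbf{0}$; $n$ users arrive sequentially, user $t$ with budget $w_t$ and utility vector $\mathbf{u}_t$, $(w_t,\mathbf{u}_t)$ i.i.d. from $\mathcal{D}$. Given price $\mathbf{p}^t$, user $t$ consumes an optimal solution $\mathbf{x}_t$ of $\max\mathbf{u}_t^\top\mathbf{x}$ s.t. $(\mathbf{p}^t)^\top\mathbf{x}\le w_t$, $\mathbf{x}\ge\mathbf{0}$. Revealed preference algorithm: initialize $\mathbf{p}^1>\mathbf{0}$; for $t=1,\dots,n$, user $t$ consumes $\mathbf{x}_t$ at price $\mathbf{p}^t$, then $\mathbf{p}^{t+1}=\mathbf{p}^t-\gamma_t(\mathbf{d}-\mathbf{x}_t)$ (no projection). Offline optimum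 $U_n^*=\max\{\sum_t w_t\log(\sum_j u_{tj}x_{tj}):\sum_t x_{tj}\le c_j\ \forall j,\ x\ge0\}$; $U_n(\boldsymbol{\pi})=\sum_t w_t\log(\mathbf{u}_t^\top\mathbf{x}_t)$; $R_n(\boldsymbol{\pi})=\mathbb{E}[U_n^*-U_n(\boldsymbol{\pi})]$; $V_n(\boldsymbol{\pi})=\mathbb{E}[\|(\sum_t\mathbf{x}_t-\mathbf{c})_+\|_2]$. Asymptotics are as $n\to\infty$ with $m,\mathbf{d},\mathcal{D},\mathbf{p}^1,\bar D$ fixed. *)

theory Defs
  imports "HOL-Probability.Probability"
begin

text \<open>Goods are indexed by a finite type 'm; vectors in R^m are real^'m.
  A user type is a pair (w, u) of budget and utility vector.\<close>

definition optimal_consumption ::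
  "real^'m \<Rightarrow> real \<Rightarrow> real^'m \<Rightarrow> real^'m \<Rightarrow> bool" where
  "optimal_consumption p w u x \<longleftrightarrow>
     (\<forall>j. 0 \<le> x $ j) \<and> p \<bullet> x \<le> w \<and>
     (\<forall>y. (\<forall>j. 0 \<le> y $ j) \<and> p \<bullet> y \<le> w \<longrightarrow> u \<bullet> y \<le> u \<bullet> x)"

definition admissible_rule ::
  "(real^'m \<Rightarrow> real \<Rightarrow> real^'m \<Rightarrow> real^'m) \<Rightarrow> bool" where
  "admissible_rule sel \<longleftrightarrow>
     (\<forall>p w u. (\<exists>x. optimal_consumption p w u x) \<longrightarrow> optimal_consumption p w u (sel p w u)) \<and>
     (\<lambda>z. sel (fst z) (fst (snd z)) (snd (snd z))) \<in> borel_measurable borel"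

text \<open>Revealed preference prices: users indexed 0,1,...; omega t = (w_t, u_t).
  rp_price ... 0 is the initial price p^1.\<close>

fun rp_price ::
  "(real^'m \<Rightarrow> real \<Rightarrow> real^'m \<Rightarrow> real^'m) \<Rightarrow> real^'m \<Rightarrow> real^'m \<Rightarrow> real
   \<Rightarrow> (nat \<Rightarrow> real \<times> (real^'m)) \<Rightarrow> nat \<Rightarrow> real^'m" where
  "rp_price sel p1 d \<gamma> \<omega> 0 = p1"
| "rp_price sel p1 d \<gamma> \<omega> (Suc t) =
     rp_price sel p1 d \<gamma> \<omega> t
     - \<gamma> *\<^sub>R (d - sel (rp_price sel p1 d \<gamma> \<omega> t) (fst (\<omega> t)) (snd (\<omega> t)))"

definition rp_alloc ::
  "(real^'m \<Rightarrow> real \<Rightarrow> real^'m \<Rightarrow> real^'m) \<Rightarrow> real^'m \<Rightarrow> real^'m \<Rightarrow> real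
   \<Rightarrow> (nat \<Rightarrow> real \<times> (real^'m)) \<Rightarrow> nat \<Rightarrow> real^'m" where
  "rp_alloc sel p1 d \<gamma> \<omega> t = sel (rp_price sel p1 d \<gamma> \<omega> t) (fst (\<omega> t)) (snd (\<omega> t))"

text \<open>Offline optimum with capacities c_j = n d_j. Allocations with some
  u_t . x_t \<le> 0 are excluded (their objective is -infinity), which avoids
  Isabelle's convention for ln on nonpositive numbers.\<close>

definition offline_opt :: "real^'m \<Rightarrow> nat \<Rightarrow> (nat \<Rightarrow> real \<times> (real^'m)) \<Rightarrow> real" where
  "offline_opt d n \<omega> = Sup {(\<Sum>t<n. fst (\<omega> t) * ln (snd (\<omega> t) \<bullet> x t)) | x.
       (\<forall>t<n. \<forall>j. 0 \<le> x t $ j) \<and>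
       (\<forall>j. (\<Sum>t<n. x t $ j) \<le> real n * d $ j) \<and>
       (\<forall>t<n. 0 < snd (\<omega> t) \<bullet> x t)}"

definition online_util ::
  "(nat \<Rightarrow> real^'m) \<Rightarrow> nat \<Rightarrow> (nat \<Rightarrow> real \<times> (real^'m)) \<Rightarrow> real" where
  "online_util x n \<omega> = (\<Sum>t<n. fst (\<omega> t) * ln (snd (\<omega> t) \<bullet> x t))"

definition violation_vec :: "real^'m \<Rightarrow> (nat \<Rightarrow> real^'m) \<Rightarrow> nat \<Rightarrow> real^'m" where
  "violation_vec d x n = (\<chi> j. max 0 ((\<Sum>t<n. x t $ j) - real n * d $ j))"

definition rp_regret ::
  "(real \<times> (real^'m)) measure \<Rightarrow> (real^'m \<Rightarrow> real \<Rightarrow> real^'m \<Rightarrow> real^'m)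
   \<Rightarrow> real^'m \<Rightarrow> real^'m \<Rightarrow> real \<Rightarrow> nat \<Rightarrow> real" where
  "rp_regret D sel p1 d \<gamma> n =
     (\<integral>\<omega>. offline_opt d n \<omega> - online_util (rp_alloc sel p1 d \<gamma> \<omega>) n \<omega>
        \<partial>(PiM {..<n} (\<lambda>_. D)))"

definition rp_violation ::
  "(real \<times> (real^'m)) measure \<Rightarrow> (real^'m \<Rightarrow> real \<Rightarrow> real^'m \<Rightarrow> real^'m)
   \<Rightarrow> real^'m \<Rightarrow> real^'m \<Rightarrow> real \<Rightarrow> nat \<Rightarrow> real" where
  "rp_violation D sel p1 d \<gamma> n =
     (\<integral>\<omega>. norm (violation_vec d (rp_alloc sel p1 d \<gamma> \<omega>) n) \<partial>(PiM {..<n} (\<lambda>_. D)))"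

end

theory Submission
  imports Defs "HOL-Probability.Probability"
begin


lemma oc_nonneg: "optimal_consumption p w u x \<Longrightarrow> 0 \<le> x $ j"
  unfolding optimal_consumption_def by blast

lemma oc_budget: "optimal_consumption p w u x \<Longrightarrow> p \<bullet> x \<le> w"
  unfolding optimal_consumption_def by blast

lemma oc_coord:
  assumes "\<forall>j. 0 < p $ j" "optimal_consumption p w u x"
  shows "p $ j * x $ j \<le> w"
proof -
  have "p $ j * x $ j \<le> (\<Sum>i\<in>UNIV. p $ i * x $ i)"
    by (rule member_le_sum) (use assms oc_nonneg in \<open>auto intro!: mult_nonneg_nonneg simp: less_imp_le\<close>)
  also have "\<dots> = p \<bullet> x" by (simp add: inner_vec_def)
  also have "\<dots> \<le> w" using oc_budget[OF assms(2)] .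
  finally show ?thesis .
qed

lemma oc_xle:
  assumes "\<forall>j. 0 < p $ j" "optimal_consumption p w u x"
  shows "x $ j \<le> w / p $ j"
  using oc_coord[OF assms, of j] assms(1) by (simp add: field_simps mult.commute)

lemma oc_axis:
  assumes p: "\<forall>j. 0 < p $ j" and w: "0 \<le> w" and oc: "optimal_consumption p w u x"
  shows "w * u $ j / p $ j \<le> u \<bullet> x"
proof -
  let ?y = "(w / p $ j) *\<^sub>R axis j (1::real)"
  have y0: "\<forall>i. 0 \<le> ?y $ i" using p w by (auto simp: axis_def less_imp_le)
  have "p \<bullet> ?y = w" using p[rule_format, of j] by (simp add: inner_axis)
  moreover have key: "\<forall>y. (\<forall>j. 0 \<le> y $ j) \<and> p \<bullet> y \<le> w \<longrightarrow> u \<bullet> y \<le> u \<bullet> x"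
    using oc unfolding optimal_consumption_def by blast
  ultimately have "u \<bullet> ?y \<le> u \<bullet> x" using y0 by (intro key[rule_format]) simp
  moreover have "u \<bullet> ?y = w * u $ j / p $ j"
  proof -
    have "u \<bullet> axis j 1 = u $ j" by (rule cart_eq_inner_axis[symmetric])
    then show ?thesis by simp
  qed
  ultimately show ?thesis by linarith
qed

lemma oc_exists:
  assumes p: "\<forall>j. 0 < p $ j" and w: "0 \<le> w" and u: "\<forall>j. 0 \<le> u $ j"
  shows "\<exists>x. optimal_consumption p w u x"
proof -
  define M where "M = Max (range (\<lambda>j. u $ j / p $ j))"
  have "M \<in> range (\<lambda>j. u $ j / p $ j)" unfolding M_def by (rule Max_in) auto
  then obtain k where k: "M = u $ k / p $ k" by auto
  have Mge: "u $ j / p $ j \<le> M" for j unfolding M_def by (rule Max_ge) auto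
  have M0: "0 \<le> M" using k p u by (simp add: less_imp_le)
  let ?x = "(w / p $ k) *\<^sub>R axis k (1::real)"
  have x0: "\<forall>i. 0 \<le> ?x $ i" using p w by (auto simp: axis_def less_imp_le)
  have px: "p \<bullet> ?x = w" using p[rule_format, of k] by (simp add: inner_axis)
  have ux: "u \<bullet> ?x = M * w" using k by (simp add: inner_axis)
  have "u \<bullet> y \<le> u \<bullet> ?x" if y0: "\<forall>j. 0 \<le> y $ j" and py: "p \<bullet> y \<le> w" for y
  proof -
    have "u \<bullet> y = (\<Sum>j\<in>UNIV. u $ j * y $ j)" by (simp add: inner_vec_def)
    also have "\<dots> \<le> (\<Sum>j\<in>UNIV. M * (p $ j * y $ j))"
    proof (rule sum_mono)
      fix j
      have "u $ j = (u $ j / p $ j) * p $ j" using p[rule_format, of j] by simp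
      also have "\<dots> \<le> M * p $ j" using Mge[of j] p[rule_format, of j] by (intro mult_right_mono) auto
      finally show "u $ j * y $ j \<le> M * (p $ j * y $ j)"
        using y0[rule_format, of j] by (metis mult.assoc mult_right_mono)
    qed
    also have "\<dots> = M * (p \<bullet> y)" by (simp add: inner_vec_def sum_distrib_left)
    also have "\<dots> \<le> M * w" using M0 py by (rule mult_left_mono[rotated])
    finally show ?thesis using ux by simp
  qed
  then have "optimal_consumption p w u ?x" unfolding optimal_consumption_def using x0 px by auto
  then show ?thesis by blast
qed

lemma oc_dual:
  assumes p: "\<forall>j. 0 < p $ j" and w: "0 < w" and oc: "optimal_consumption p w u x"
    and y0: "\<forall>j. 0 \<le> y $ j" and uy: "0 < u \<bullet> y"
  shows "w * ln (u \<bullet> y) \<le> w * ln (u \<bullet> x) + p \<bullet> y - w"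
proof -
  define s where "s = p \<bullet> y"
  have s_eq: "s = (\<Sum>j\<in>UNIV. p $ j * y $ j)" by (simp add: s_def inner_vec_def)
  have s0: "0 < s"
  proof (rule ccontr)
    assume "\<not> 0 < s"
    moreover have "0 \<le> s" unfolding s_eq using p y0 by (auto intro!: sum_nonneg simp: less_imp_le)
    ultimately have "s = 0" by simp
    then have "\<forall>j\<in>UNIV. p $ j * y $ j = 0" unfolding s_eq
      using p y0 by (subst (asm) sum_nonneg_eq_0_iff) (auto simp: less_imp_le)
    then have "\<forall>j. y $ j = 0" using p by (simp add: less_le)
    then have "y = 0" by (simp add: vec_eq_iff)
    then show False using uy by simp
  qed
  let ?y = "(w / s) *\<^sub>R y"
  have "\<forall>j. 0 \<le> ?y $ j" using y0 w s0 by auto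
  moreover have "p \<bullet> ?y = w" using s0 by (simp add: s_def)
  moreover have key: "\<forall>y. (\<forall>j. 0 \<le> y $ j) \<and> p \<bullet> y \<le> w \<longrightarrow> u \<bullet> y \<le> u \<bullet> x"
    using oc unfolding optimal_consumption_def by blast
  ultimately have le: "u \<bullet> ?y \<le> u \<bullet> x" by (intro key[rule_format]) simp
  have "u \<bullet> ?y = (w / s) * (u \<bullet> y)" by simp
  with le have le2: "u \<bullet> y \<le> (s / w) * (u \<bullet> x)" using w s0 by (simp add: field_simps)
  have ux: "0 < u \<bullet> x" using le uy w s0 by (smt (verit) \<open>u \<bullet> ?y = w / s * (u \<bullet> y)\<close> divide_pos_pos mult_pos_pos)
  have "ln (u \<bullet> y) \<le> ln ((s / w) * (u \<bullet> x))" using le2 uy by simp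
  also have "\<dots> = ln (s / w) + ln (u \<bullet> x)" using s0 w ux by (subst ln_mult) auto
  also have "ln (s / w) \<le> s / w - 1" using s0 w by (intro ln_le_minus_one) simp
  finally have "ln (u \<bullet> y) \<le> s / w - 1 + ln (u \<bullet> x)" by simp
  then have "w * ln (u \<bullet> y) \<le> w * (s / w - 1 + ln (u \<bullet> x))" using w by simp
  also have "\<dots> = w * ln (u \<bullet> x) + s - w" using w by (simp add: field_simps)
  finally show ?thesis by (simp add: s_def)
qed



lemma delta_gen:
  fixes q p x g dd :: real
  assumes "0 < q" "q \<le> p" "0 \<le> x" "0 < g" "0 < dd" "g * dd \<le> p / 2"
  shows "1 / (p + g * (x - dd)) - 1 / p \<le> 2 * g * dd / q^2"
proof (cases "dd \<le> x")
  case True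
  then have "p \<le> p + g * (x - dd)" using assms by simp
  then have "1 / (p + g * (x - dd)) \<le> 1 / p" using assms by (intro divide_left_mono) auto
  moreover have "0 \<le> 2 * g * dd / q^2" using assms by simp
  ultimately show ?thesis by linarith
next
  case False
  define p' where "p' = p + g * (x - dd)"
  have p'ge: "p / 2 \<le> p'"
  proof -
    have "g * (x - dd) = g * x - g * dd" by (simp add: algebra_simps)
    moreover have "0 \<le> g * x" using assms by simp
    ultimately show ?thesis unfolding p'_def using assms by linarith
  qed
  have p0: "0 < p" using assms by simp
  have p'0: "0 < p'" using p'ge p0 by simp
  have "1 / p' - 1 / p = (p - p') / (p * p')" using p0 p'0 by (simp add: field_simps)
  also have "p - p' \<le> g * dd" unfolding p'_def using assms by (simp add: algebra_simps)
  then have "(p - p') / (p * p') \<le> (g * dd) / (p * p')" using p0 p'0 by (intro divide_right_mono) auto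
  also have "\<dots> \<le> (g * dd) / (p * (p / 2))"
  proof (rule divide_left_mono)
    show "p * (p / 2) \<le> p * p'" using p0 p'ge by simp
  qed (use p0 p'0 assms in auto)
  also have "\<dots> = 2 * g * dd / p^2" by (simp add: power2_eq_square)
  also have "\<dots> \<le> 2 * g * dd / q^2"
  proof (rule divide_left_mono)
    show "q^2 \<le> p^2" using assms by (intro power_mono) auto
  qed (use assms in auto)
  finally show ?thesis unfolding p'_def .
qed

lemma delta_k:
  fixes q p x g dd c p' :: real
  assumes "0 < q" "0 < p" "p \<le> c * q" "p' = p + g * (x - dd)" "dd \<le> x" "p' \<le> 2 * c * q" "0 < g"
  shows "1 / p' - 1 / p \<le> - (g * (x - dd)) / (2 * c^2 * q^2)"
proof -
  have N: "0 \<le> g * (x - dd)" using assms by simp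
  have p'p: "p \<le> p'" using assms(4) N by simp
  have p'0: "0 < p'" using p'p assms(2) by linarith
  have "1 / p' - 1 / p = - (g * (x - dd)) / (p * p')" using assms p'0 by (simp add: field_simps)
  also have pp: "p * p' \<le> (c * q) * (2 * c * q)" using assms p'0 by (intro mult_mono) auto
  have pp0: "0 < p * p'" using assms p'0 by simp
  have cc0: "0 < (c * q) * (2 * c * q)" using pp pp0 by linarith
  have "- (g * (x - dd)) / (p * p') \<le> - (g * (x - dd)) / ((c * q) * (2 * c * q))"
    by (rule divide_left_mono_neg[OF pp]) (use N mult_pos_pos[OF pp0 cc0] in auto)
  also have "(c * q) * (2 * c * q) = 2 * c^2 * q^2" by (simp add: power2_eq_square)
  finally show ?thesis .
qed

locale dyn =
  fixes d p1 :: "real^'m" and wl wu a A :: real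
    and sel :: "real^'m \<Rightarrow> real \<Rightarrow> real^'m \<Rightarrow> real^'m"
  assumes d_pos: "\<forall>j. 0 < d $ j" and p1_pos: "\<forall>j. 0 < p1 $ j"
    and wl_pos: "0 < wl" and wl_wu: "wl \<le> wu" and a_pos: "0 < a" and a_A: "a \<le> A"
    and sel_opt: "\<And>p w u. (\<exists>x. optimal_consumption p w u x) \<Longrightarrow> optimal_consumption p w u (sel p w u)"
begin

definition "S' = {z. wl \<le> fst z \<and> fst z \<le> wu \<and> (\<forall>j. a \<le> snd z $ j \<and> snd z $ j \<le> A)}"
definition "mm = real CARD('m)"
definition "dmax = Max (range (\<lambda>j. d $ j))"
definition "dmin = Min (range (\<lambda>j. d $ j))"
definition "Dsum = (\<Sum>j\<in>UNIV. d $ j)"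
definition "c = mm * A / a"
definition "q1 = wl / (c * (dmax + 4 * c^2 * Dsum))"
definition "K0 = max (mm / q1) (\<Sum>j\<in>UNIV. 1 / p1 $ j)"
definition "K = K0 + 1"
definition "L = 1 / K"
definition "U = max (Max (range (\<lambda>j. p1 $ j))) (wu / dmin + 1)"
definition "g0 = min (min (L / (2 * dmax)) (L * L / wu)) (min (1 / (2 * Dsum * K^2)) (L / wu))"
definition "Inv p \<longleftrightarrow> (\<forall>j. 0 < p $ j) \<and> (\<Sum>j\<in>UNIV. 1 / p $ j) \<le> K \<and> (\<forall>j. p $ j \<le> U)"

lemma wu_pos: "0 < wu" using wl_pos wl_wu by simp
lemma A_pos: "0 < A" using a_pos a_A by simp
lemma mm_ge1: "1 \<le> mm" unfolding mm_def by simp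
lemma dmax_ge: "d $ j \<le> dmax" unfolding dmax_def by (rule Max_ge) auto
lemma dmin_le: "dmin \<le> d $ j" unfolding dmin_def by (rule Min_le) auto
lemma dmin_pos: "0 < dmin"
proof -
  have "dmin \<in> range (\<lambda>j. d $ j)" unfolding dmin_def by (rule Min_in) auto
  then show ?thesis using d_pos by auto
qed
lemma dmax_pos: "0 < dmax" using dmax_ge[of undefined] d_pos by (meson less_le_trans)
lemma Dsum_pos: "0 < Dsum" unfolding Dsum_def using d_pos by (intro sum_pos) auto
lemma c_ge1: "1 \<le> c"
proof -
  have "1 \<le> A / a" using a_pos a_A by simp
  then have "1 * 1 \<le> mm * (A / a)" using mm_ge1 by (intro mult_mono) auto
  then show ?thesis unfolding c_def by simp
qed
lemma c_pos: "0 < c" using c_ge1 by simp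
lemma q1_pos: "0 < q1" unfolding q1_def using wl_pos c_pos dmax_pos Dsum_pos
  by (intro divide_pos_pos mult_pos_pos add_pos_nonneg) auto
lemma K0_pos: "0 < K0"
proof -
  have "0 < mm / q1" using q1_pos mm_ge1 by simp
  then show ?thesis unfolding K0_def by (meson max.cobounded1 less_le_trans)
qed
lemma K_pos: "0 < K" unfolding K_def using K0_pos by simp
lemma L_pos: "0 < L" unfolding L_def using K_pos by simp
lemma U_pos: "0 < U"
proof -
  have "0 < wu / dmin + 1" using wu_pos dmin_pos by (simp add: add_pos_pos)
  then show ?thesis unfolding U_def by (meson max.cobounded2 less_le_trans)
qed
lemma g0_pos: "0 < g0" unfolding g0_def using L_pos dmax_pos wu_pos Dsum_pos K_pos by simp

lemma Inv_L: assumes "Inv p" shows "L \<le> p $ j"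
proof -
  have pos: "\<forall>j. 0 < p $ j" using assms unfolding Inv_def by simp
  have "1 / p $ j \<le> (\<Sum>j\<in>UNIV. 1 / p $ j)"
    by (rule member_le_sum) (use pos in \<open>auto simp: less_imp_le\<close>)
  also have "\<dots> \<le> K" using assms unfolding Inv_def by simp
  finally have "1 / p $ j \<le> K" .
  then show ?thesis unfolding L_def using pos[rule_format, of j] K_pos by (simp add: field_simps)
qed

lemma Inv_p1: "Inv p1"
  unfolding Inv_def
proof (intro conjI allI)
  show "0 < p1 $ j" for j using p1_pos by simp
  show "(\<Sum>j\<in>UNIV. 1 / p1 $ j) \<le> K" unfolding K_def K0_def by simp
  show "p1 $ j \<le> U" for j unfolding U_def
    by (rule max.coboundedI1, rule Max_ge) auto
qed

end


context dyn begin

lemma inv_step: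
  assumes inv: "Inv p" and g: "0 < g" "g \<le> g0" and z: "z \<in> S'"
    and oc: "optimal_consumption p (fst z) (snd z) x"
  shows "Inv (p - g *\<^sub>R (d - x))"
proof -
  define w where "w = fst z"
  define u where "u = snd z"
  define p' where "p' = p - g *\<^sub>R (d - x)"
  have oc': "optimal_consumption p w u x" using oc w_def u_def by simp
  have w: "wl \<le> w" "w \<le> wu" using z unfolding S'_def w_def by auto
  have u: "a \<le> u $ j" "u $ j \<le> A" for j using z unfolding S'_def u_def by auto
  have pos: "\<forall>j. 0 < p $ j" using inv unfolding Inv_def by simp
  have pL: "L \<le> p $ j" for j by (rule Inv_L[OF inv])
  have pU: "p $ j \<le> U" for j using inv unfolding Inv_def by simp
  have sumK: "(\<Sum>j\<in>UNIV. 1 / p $ j) \<le> K" using inv unfolding Inv_def by simp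
  have x0: "0 \<le> x $ j" for j using oc' by (rule oc_nonneg)
  have xle: "x $ j \<le> w / p $ j" for j using oc_xle[OF pos oc'] .
  have pxle: "p $ j * x $ j \<le> w" for j using oc_coord[OF pos oc'] .
  have p'j: "p' $ j = p $ j + g * (x $ j - d $ j)" for j unfolding p'_def by (simp add: algebra_simps)
  have gd: "g * d $ j \<le> L / 2" for j
  proof -
    have "g * d $ j \<le> g0 * dmax" using g dmax_ge[of j] d_pos by (intro mult_mono) (auto simp: less_imp_le)
    also have "\<dots> \<le> L / (2 * dmax) * dmax" using dmax_pos unfolding g0_def by (intro mult_right_mono) auto
    also have "\<dots> = L / 2" using dmax_pos by simp
    finally show ?thesis .
  qed
  have gx: "g * x $ j \<le> L * L / wu * (wu / L)" for j
  proof -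
    have "x $ j \<le> w / p $ j" by (rule xle)
    also have "\<dots> \<le> wu / L" using w pL[of j] L_pos wl_pos by (intro frac_le) auto
    finally have xj: "x $ j \<le> wu / L" .
    have "g \<le> L * L / wu" using g unfolding g0_def by simp
    then show ?thesis using xj g x0[of j] by (intro mult_mono) (auto simp: wu_pos L_pos less_imp_le)
  qed
  have gx1: "g * x $ j \<le> L" for j using gx[of j] wu_pos L_pos by (simp add: field_simps power2_eq_square)
  have gx2: "g * x $ j \<le> 1" for j
  proof -
    have "x $ j \<le> wu / L" using xle[of j] w pL[of j] L_pos wl_pos
      by (smt (verit) divide_right_mono frac_le)
    moreover have "g \<le> L / wu" using g unfolding g0_def by simp
    ultimately have "g * x $ j \<le> L / wu * (wu / L)" using g x0[of j] by (intro mult_mono) (auto simp: wu_pos L_pos less_imp_le)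
    then show ?thesis using wu_pos L_pos by simp
  qed
  have pos': "0 < p' $ j" for j
  proof -
    have "p $ j - L / 2 \<le> p' $ j" unfolding p'j using gd[of j] g x0[of j]
      by (smt (verit) mult_nonneg_nonneg right_diff_distrib)
    then show ?thesis using pL[of j] L_pos by simp
  qed
  have U': "p' $ j \<le> U" for j
  proof (cases "wu / dmin \<le> p $ j")
    case True
    have "x $ j \<le> w / p $ j" by (rule xle)
    also have "\<dots> \<le> wu / (wu / dmin)" using True w wl_pos wu_pos dmin_pos by (intro frac_le) auto
    also have "\<dots> = dmin" using wu_pos by simp
    also have "\<dots> \<le> d $ j" by (rule dmin_le)
    finally have "g * (x $ j - d $ j) \<le> 0" using g by (simp add: mult_nonneg_nonpos)
    then show ?thesis unfolding p'j using pU[of j] by simp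
  next
    case False
    have "p' $ j \<le> p $ j + g * x $ j" unfolding p'j using g d_pos by (simp add: algebra_simps less_imp_le)
    also have "\<dots> \<le> wu / dmin + 1" using False gx2[of j] by simp
    also have "\<dots> \<le> U" unfolding U_def by simp
    finally show ?thesis .
  qed
  define q where "q = Min (range (\<lambda>j. p $ j))"
  have "q \<in> range (\<lambda>j. p $ j)" unfolding q_def by (rule Min_in) auto
  then obtain j0 where j0: "p $ j0 = q" by auto
  have qle: "q \<le> p $ j" for j unfolding q_def by (rule Min_le) auto
  have qL: "L \<le> q" using pL[of j0] j0 by simp
  have q0: "0 < q" using qL L_pos by simp
  have Dj: "1 / p' $ j - 1 / p $ j \<le> 2 * g * d $ j / q^2" for j
    unfolding p'j using q0 qle[of j] x0[of j] g d_pos gd[of j] pL[of j]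
    by (intro delta_gen) auto
  have sum_split: "(\<Sum>j\<in>UNIV. 1 / p' $ j) = (\<Sum>j\<in>UNIV. 1 / p $ j) + (\<Sum>j\<in>UNIV. 1 / p' $ j - 1 / p $ j)"
    by (simp add: sum_subtractf)
  have sum_d: "(\<Sum>j\<in>UNIV. 2 * g * d $ j / q^2) = 2 * g * Dsum / q^2"
    unfolding Dsum_def by (simp add: sum_divide_distrib[symmetric] sum_distrib_left)
  have sumK': "(\<Sum>j\<in>UNIV. 1 / p' $ j) \<le> K"
  proof (cases "(\<Sum>j\<in>UNIV. 1 / p $ j) \<le> K0")
    case True
    have "(\<Sum>j\<in>UNIV. 1 / p' $ j - 1 / p $ j) \<le> (\<Sum>j\<in>UNIV. 2 * g * d $ j / q^2)"
      by (rule sum_mono) (rule Dj)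
    also have "\<dots> = 2 * g * Dsum / q^2" by (rule sum_d)
    also have "\<dots> \<le> 2 * g * Dsum * K^2"
    proof -
      have "1 / q \<le> K" using qL q0 K_pos unfolding L_def by (simp add: field_simps)
      then have "(1 / q)^2 \<le> K^2" using q0 by (intro power_mono) auto
      then have "2 * g * Dsum * (1 / q)^2 \<le> 2 * g * Dsum * K^2" using g Dsum_pos
        by (intro mult_left_mono) auto
      then show ?thesis by (simp add: power_divide)
    qed
    also have "\<dots> \<le> 1"
    proof -
      have "g \<le> 1 / (2 * Dsum * K^2)" using g unfolding g0_def by simp
      then have "g * (2 * Dsum * K^2) \<le> 1" using Dsum_pos K_pos by (simp add: field_simps)
      then show ?thesis by (simp add: algebra_simps)
    qed
    finally show ?thesis using sum_split True unfolding K_def by linarith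
  next
    case False
    have mq: "(\<Sum>j\<in>UNIV. 1 / p $ j) \<le> mm / q"
    proof -
      have "(\<Sum>j\<in>UNIV. 1 / p $ j) \<le> (\<Sum>j\<in>(UNIV::'m set). 1 / q)"
      proof (rule sum_mono)
        fix j :: 'm
        show "1 / p $ j \<le> 1 / q" using q0 qle[of j] by (simp add: frac_le)
      qed
      then show ?thesis unfolding mm_def by simp
    qed
    have "mm / q1 \<le> K0" unfolding K0_def by simp
    then have "mm / q1 < mm / q" using False mq by linarith
    then have qq1: "q < q1"
    proof (rule contrapos_pp)
      assume "\<not> q < q1"
      then have "q1 \<le> q" by simp
      then have "mm / q \<le> mm / q1" using q1_pos mm_ge1 by (intro divide_left_mono) auto
      then show "\<not> mm / q1 < mm / q" by simp
    qed
    have ux_ge: "w * a / q \<le> u \<bullet> x"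
    proof -
      have "w * a / q \<le> w * u $ j0 / p $ j0" unfolding j0 using w wl_pos u[of j0] q0
        by (intro divide_right_mono mult_left_mono) auto
      also have "\<dots> \<le> u \<bullet> x" using oc_axis[OF pos _ oc'] w wl_pos by simp
      finally show ?thesis .
    qed
    define k where "k = (SOME k. \<forall>j. u $ j * x $ j \<le> u $ k * x $ k)"
    have "\<exists>k. \<forall>j. u $ j * x $ j \<le> u $ k * x $ k"
    proof -
      have "Max (range (\<lambda>j. u $ j * x $ j)) \<in> range (\<lambda>j. u $ j * x $ j)" by (rule Max_in) auto
      then obtain k where "Max (range (\<lambda>j. u $ j * x $ j)) = u $ k * x $ k" by (meson rangeE)
      moreover have "u $ j * x $ j \<le> Max (range (\<lambda>j. u $ j * x $ j))" for j by (rule Max_ge) auto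
      ultimately show ?thesis by metis
    qed
    then have kmax: "\<forall>j. u $ j * x $ j \<le> u $ k * x $ k" unfolding k_def by (rule someI_ex)
    have "u \<bullet> x \<le> mm * (u $ k * x $ k)"
    proof -
      have "u \<bullet> x = (\<Sum>j\<in>UNIV. u $ j * x $ j)" by (simp add: inner_vec_def)
      also have "\<dots> \<le> (\<Sum>j\<in>(UNIV::'m set). u $ k * x $ k)" by (rule sum_mono) (use kmax in auto)
      finally show ?thesis unfolding mm_def by simp
    qed
    with ux_ge have "w * a / q \<le> mm * (u $ k * x $ k)" by linarith
    also have "\<dots> \<le> mm * (A * x $ k)" using u[of k] x0[of k] mm_ge1 by (intro mult_left_mono mult_right_mono) auto
    finally have xk_ge: "w / (c * q) \<le> x $ k" unfolding c_def using a_pos A_pos mm_ge1 q0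
      by (simp add: field_simps)
    have xk_pos: "0 < x $ k" using xk_ge w wl_pos c_pos q0
      by (smt (verit) divide_pos_pos mult_pos_pos)
    have pk: "p $ k \<le> c * q"
    proof -
      have "p $ k * (w / (c * q)) \<le> p $ k * x $ k" using xk_ge pos by (intro mult_left_mono) (auto simp: less_imp_le)
      also have "\<dots> \<le> w" by (rule pxle)
      finally have "p $ k * (w / (c * q)) \<le> w" .
      then show ?thesis using w wl_pos c_pos q0 by (simp add: field_simps)
    qed
    have "wl / (c * q1) \<le> wl / (c * q)"
      using qq1 q0 c_pos wl_pos by (intro divide_left_mono mult_left_mono) auto
    also have "\<dots> \<le> w / (c * q)" using w c_pos q0 by (intro divide_right_mono) auto
    finally have "wl / (c * q1) \<le> x $ k" using xk_ge by linarith
    moreover have "wl / (c * q1) = dmax + 4 * c^2 * Dsum" unfolding q1_def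
      using wl_pos c_pos dmax_pos Dsum_pos
      by (simp add: field_simps)
    ultimately have xk_big: "d $ k + 4 * c^2 * Dsum \<le> x $ k" using dmax_ge[of k] by linarith
    have p'k: "p' $ k \<le> 2 * c * q"
    proof -
      have "p' $ k \<le> p $ k + g * x $ k" unfolding p'j using g d_pos by (simp add: algebra_simps less_imp_le)
      also have "\<dots> \<le> c * q + q" using pk gx1[of k] qL by simp
      also have "\<dots> \<le> 2 * c * q" using c_ge1 q0 by (simp add: algebra_simps)
      finally show ?thesis .
    qed
    have Dk: "1 / p' $ k - 1 / p $ k \<le> - (g * (x $ k - d $ k)) / (2 * c^2 * q^2)"
    proof (rule delta_k[OF _ _ _ p'j])
      have "0 \<le> 4 * c^2 * Dsum" using Dsum_pos by simp
      then show "d $ k \<le> x $ k" using xk_big by linarith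
    qed (use q0 pos p'k pk g in auto)
    also have "\<dots> \<le> - (g * (4 * c^2 * Dsum)) / (2 * c^2 * q^2)"
      using xk_big g c_pos q0 by (intro divide_right_mono) auto
    also have "\<dots> = - (2 * g * Dsum / q^2)" using c_pos by (simp add: field_simps power2_eq_square)
    finally have Dk': "1 / p' $ k - 1 / p $ k \<le> - (2 * g * Dsum / q^2)" .
    have "(\<Sum>j\<in>UNIV. 1 / p' $ j - 1 / p $ j) = (1 / p' $ k - 1 / p $ k) + (\<Sum>j\<in>UNIV - {k}. 1 / p' $ j - 1 / p $ j)"
      by (subst sum.remove[of _ k]) auto
    also have "(\<Sum>j\<in>UNIV - {k}. 1 / p' $ j - 1 / p $ j) \<le> (\<Sum>j\<in>UNIV - {k}. 2 * g * d $ j / q^2)"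
      by (rule sum_mono) (rule Dj)
    also have "\<dots> \<le> (\<Sum>j\<in>UNIV. 2 * g * d $ j / q^2)"
      by (rule sum_mono2) (use g d_pos in \<open>auto simp: less_imp_le\<close>)
    also have "\<dots> = 2 * g * Dsum / q^2" by (rule sum_d)
    finally have "(\<Sum>j\<in>UNIV. 1 / p' $ j - 1 / p $ j) \<le> 0" using Dk' by linarith
    then show ?thesis using sum_split sumK by linarith
  qed
  show ?thesis unfolding Inv_def p'_def[symmetric] using pos' sumK' U' by auto
qed

end


lemma telescope_sq:
  fixes P e :: "nat \<Rightarrow> real"
  assumes rec: "\<And>t. P (Suc t) = P t - g * e t" and g: "g \<noteq> 0"
  shows "(\<Sum>t<n. P t * e t) = (P 0 ^ 2 - P n ^ 2) / (2 * g) + g / 2 * (\<Sum>t<n. e t ^ 2)"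
proof (induction n)
  case 0
  then show ?case by simp
next
  case (Suc n)
  have "(\<Sum>t<Suc n. P t * e t) = (P 0 ^ 2 - P n ^ 2) / (2 * g) + g / 2 * (\<Sum>t<n. e t ^ 2) + P n * e n"
    using Suc by simp
  also have "\<dots> = (P 0 ^ 2 - P (Suc n) ^ 2) / (2 * g) + g / 2 * (\<Sum>t<Suc n. e t ^ 2)"
    unfolding rec using g by (simp add: field_simps power2_eq_square)
  finally show ?case .
qed

lemma price_sum:
  "rp_price sel p1 d g \<omega> n $ j = p1 $ j - g * (\<Sum>t<n. d $ j - rp_alloc sel p1 d g \<omega> t $ j)"
  by (induction n) (simp_all add: rp_alloc_def algebra_simps)

context dyn begin

definition "gf p z = fst z * ln (snd z \<bullet> sel p (fst z) (snd z)) + p \<bullet> d - fst z"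

lemma S'_w: "z \<in> S' \<Longrightarrow> wl \<le> fst z \<and> fst z \<le> wu" unfolding S'_def by auto
lemma S'_u: "z \<in> S' \<Longrightarrow> a \<le> snd z $ j \<and> snd z $ j \<le> A" unfolding S'_def by auto

lemma Inv_pos: "Inv p \<Longrightarrow> \<forall>j. 0 < p $ j" unfolding Inv_def by simp
lemma Inv_U: "Inv p \<Longrightarrow> p $ j \<le> U" unfolding Inv_def by simp

lemma oc_sel:
  assumes "Inv p" "z \<in> S'"
  shows "optimal_consumption p (fst z) (snd z) (sel p (fst z) (snd z))"
proof (rule sel_opt, rule oc_exists)
  show "\<forall>j. 0 < p $ j" using Inv_pos[OF assms(1)] .
  show "0 \<le> fst z" using S'_w[OF assms(2)] wl_pos by simp
  show "\<forall>j. 0 \<le> snd z $ j" using S'_u[OF assms(2)] a_pos by (meson less_le_trans less_imp_le)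
qed

lemma price_inv:
  assumes g: "0 < g" "g \<le> g0" and om: "\<forall>s<t. \<omega> s \<in> S'"
  shows "Inv (rp_price sel p1 d g \<omega> t)"
  using om
proof (induction t)
  case 0
  then show ?case using Inv_p1 by simp
next
  case (Suc t)
  then have inv: "Inv (rp_price sel p1 d g \<omega> t)" by simp
  have z: "\<omega> t \<in> S'" using Suc.prems by simp
  show ?case using inv_step[OF inv g z oc_sel[OF inv z]] by simp
qed

lemma alloc_oc:
  assumes g: "0 < g" "g \<le> g0" and om: "\<forall>s\<le>t. \<omega> s \<in> S'"
  shows "optimal_consumption (rp_price sel p1 d g \<omega> t) (fst (\<omega> t)) (snd (\<omega> t)) (rp_alloc sel p1 d g \<omega> t)"
  unfolding rp_alloc_def using oc_sel[OF price_inv[OF g] ] om by auto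

lemma alloc_bounds:
  assumes g: "0 < g" "g \<le> g0" and om: "\<forall>s\<le>t. \<omega> s \<in> S'"
  shows "0 \<le> rp_alloc sel p1 d g \<omega> t $ j \<and> rp_alloc sel p1 d g \<omega> t $ j \<le> wu * K"
proof -
  have inv: "Inv (rp_price sel p1 d g \<omega> t)" using price_inv[OF g] om by auto
  have oc: "optimal_consumption (rp_price sel p1 d g \<omega> t) (fst (\<omega> t)) (snd (\<omega> t)) (rp_alloc sel p1 d g \<omega> t)"
    by (rule alloc_oc[OF g om])
  have "rp_alloc sel p1 d g \<omega> t $ j \<le> fst (\<omega> t) / rp_price sel p1 d g \<omega> t $ j"
    by (rule oc_xle[OF Inv_pos[OF inv] oc])
  also have "\<dots> \<le> wu / L" using S'_w[of "\<omega> t"] om Inv_L[OF inv, of j] L_pos wl_pos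
    by (intro frac_le) auto
  also have "\<dots> = wu * K" unfolding L_def by simp
  finally show ?thesis using oc_nonneg[OF oc] by simp
qed

end

lemma cSup_le_family:
  fixes f :: "'a \<Rightarrow> real"
  assumes "\<exists>x. P x" "\<And>x. P x \<Longrightarrow> f x \<le> B"
  shows "Sup {f x | x. P x} \<le> B"
proof (rule cSup_least)
  show "{f x | x. P x} \<noteq> {}" using assms(1) by blast
  show "\<And>v. v \<in> {f x | x. P x} \<Longrightarrow> v \<le> B" using assms(2) by blast
qed

lemma sum_rearr1: "(\<Sum>t<n. (F t::real) + G t - H t) = (\<Sum>t<n. F t - H t) + (\<Sum>t<n. G t)"
  by (simp add: sum.distrib[symmetric] sum_subtractf[symmetric] algebra_simps)
lemma sum_inner_swap: fixes ps :: "real^'m" shows "(\<Sum>t<n. ps \<bullet> x t) = (\<Sum>j\<in>UNIV. ps $ j * (\<Sum>t<n. x t $ j))"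
  unfolding inner_vec_def inner_real_def sum_distrib_left by (rule sum.swap)
lemma sum_inner_const: fixes ps :: "real^'m" shows "(\<Sum>j\<in>UNIV. ps $ j * (real n * d $ j)) = (\<Sum>t<n. ps \<bullet> d)"
  by (simp add: inner_vec_def sum_distrib_left[symmetric] algebra_simps)
context dyn begin

definition "Mg = wu * (\<bar>ln (wl * a / U)\<bar> + \<bar>ln (mm * A * wu * K)\<bar>) + U * Dsum + wu"

lemma x_le_wuK:
  assumes "Inv p" "z \<in> S'" "optimal_consumption p (fst z) (snd z) x"
  shows "x $ j \<le> wu * K"
proof -
  have "x $ j \<le> fst z / p $ j" by (rule oc_xle[OF Inv_pos[OF assms(1)] assms(3)])
  also have "\<dots> \<le> wu / L" using S'_w[OF assms(2)] Inv_L[OF assms(1), of j] L_pos wl_pos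
    by (intro frac_le) auto
  also have "\<dots> = wu * K" unfolding L_def by simp
  finally show ?thesis .
qed

lemma pd_bound: "Inv p \<Longrightarrow> 0 \<le> p \<bullet> d \<and> p \<bullet> d \<le> U * Dsum"
proof -
  assume inv: "Inv p"
  have "p \<bullet> d = (\<Sum>j\<in>UNIV. p $ j * d $ j)" by (simp add: inner_vec_def)
  moreover have "0 \<le> (\<Sum>j\<in>UNIV. p $ j * d $ j)"
    using Inv_pos[OF inv] d_pos by (intro sum_nonneg) (simp add: less_imp_le)
  moreover have "(\<Sum>j\<in>UNIV. p $ j * d $ j) \<le> (\<Sum>j\<in>UNIV. U * d $ j)"
    using Inv_U[OF inv] d_pos by (intro sum_mono mult_right_mono) (auto simp: less_imp_le)
  moreover have "(\<Sum>j\<in>UNIV. U * d $ j) = U * Dsum" unfolding Dsum_def by (simp add: sum_distrib_left)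
  ultimately show ?thesis by simp
qed

lemma gf_bound:
  assumes inv: "Inv p" and z: "z \<in> S'"
  shows "\<bar>gf p z\<bar> \<le> Mg"
proof -
  define w where "w = fst z"
  define u where "u = snd z"
  define x where "x = sel p w u"
  have oc: "optimal_consumption p w u x" using oc_sel[OF inv z] unfolding x_def w_def u_def .
  have w: "wl \<le> w" "w \<le> wu" using S'_w[OF z] w_def by auto
  have u: "a \<le> u $ j" "u $ j \<le> A" for j using S'_u[OF z] u_def by auto
  have lo: "wl * a / U \<le> u \<bullet> x"
  proof -
    fix j :: 'm
    have "wl * a / U \<le> w * u $ j / p $ j"
      using w u[of j] wl_pos a_pos Inv_pos[OF inv] Inv_U[OF inv, of j] U_pos
      by (intro frac_le mult_mono) auto
    also have "\<dots> \<le> u \<bullet> x" using oc_axis[OF Inv_pos[OF inv] _ oc] w wl_pos by simp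
    finally show ?thesis .
  qed
  have hi: "u \<bullet> x \<le> mm * A * wu * K"
  proof -
    have "u \<bullet> x = (\<Sum>j\<in>UNIV. u $ j * x $ j)" by (simp add: inner_vec_def)
    also have "\<dots> \<le> (\<Sum>j\<in>(UNIV::'m set). A * (wu * K))"
    proof (rule sum_mono)
      fix j
      have "x $ j \<le> wu * K" using x_le_wuK[OF inv z] oc unfolding w_def u_def by blast
      then show "u $ j * x $ j \<le> A * (wu * K)" using u[of j] oc_nonneg[OF oc, of j] a_pos
        by (intro mult_mono) auto
    qed
    also have "\<dots> = mm * A * wu * K" unfolding mm_def by simp
    finally show ?thesis .
  qed
  have lo0: "0 < wl * a / U" using wl_pos a_pos U_pos by simp
  have lnb: "\<bar>ln (u \<bullet> x)\<bar> \<le> \<bar>ln (wl * a / U)\<bar> + \<bar>ln (mm * A * wu * K)\<bar>"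
  proof -
    have "ln (wl * a / U) \<le> ln (u \<bullet> x)" using lo lo0 by simp
    moreover have "ln (u \<bullet> x) \<le> ln (mm * A * wu * K)" using lo lo0 hi by simp
    ultimately show ?thesis by linarith
  qed
  define B1 where "B1 = wu * (\<bar>ln (wl * a / U)\<bar> + \<bar>ln (mm * A * wu * K)\<bar>)"
  have "\<bar>w * ln (u \<bullet> x)\<bar> \<le> B1"
    unfolding abs_mult B1_def using w wl_pos lnb by (intro mult_mono) auto
  then have W: "- B1 \<le> w * ln (u \<bullet> x)" "w * ln (u \<bullet> x) \<le> B1" by (simp_all only: abs_le_iff) linarith+
  have gfe: "gf p z = w * ln (u \<bullet> x) + p \<bullet> d - w" unfolding gf_def w_def u_def x_def by simp
  have pd: "0 \<le> p \<bullet> d" "p \<bullet> d \<le> U * Dsum" using pd_bound[OF inv] by auto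
  have "- (B1 + U * Dsum + wu) \<le> gf p z" "gf p z \<le> B1 + U * Dsum + wu"
    unfolding gfe using W pd w wl_pos by linarith+
  then show ?thesis unfolding Mg_def B1_def[symmetric] by (intro abs_leI) linarith+
qed

lemma offline_le:
  assumes om: "\<forall>t<n. \<omega> t \<in> S'" and inv: "Inv ps"
  shows "offline_opt d n \<omega> \<le> (\<Sum>t<n. gf ps (\<omega> t))"
  unfolding offline_opt_def
proof (rule cSup_le_family)
  let ?x = "\<lambda>t::nat. d"
  show "\<exists>x. (\<forall>t<n. \<forall>j. 0 \<le> x t $ j) \<and> (\<forall>j. (\<Sum>t<n. x t $ j) \<le> real n * d $ j) \<and> (\<forall>t<n. 0 < snd (\<omega> t) \<bullet> x t)"
  proof (rule exI[where x="?x"], intro conjI allI impI)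
    show "0 \<le> ?x t $ j" for t j using d_pos by (simp add: less_imp_le)
    show "(\<Sum>t<n. ?x t $ j) \<le> real n * d $ j" for j by simp
    fix t assume "t < n"
    then have z: "\<omega> t \<in> S'" using om by simp
    have "snd (\<omega> t) \<bullet> d = (\<Sum>j\<in>UNIV. snd (\<omega> t) $ j * d $ j)" by (simp add: inner_vec_def)
    also have "\<dots> > 0"
    proof (rule sum_pos)
      fix j :: 'm
      have "0 < snd (\<omega> t) $ j" using S'_u[OF z, of j] a_pos by linarith
      then show "0 < snd (\<omega> t) $ j * d $ j" using d_pos by simp
    qed auto
    finally show "0 < snd (\<omega> t) \<bullet> ?x t" by simp
  qed
next
  fix x assume "(\<forall>t<n. \<forall>j. 0 \<le> x t $ j) \<and> (\<forall>j. (\<Sum>t<n. x t $ j) \<le> real n * d $ j) \<and> (\<forall>t<n. 0 < snd (\<omega> t) \<bullet> x t)"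
  then have x0: "\<forall>t<n. \<forall>j. 0 \<le> x t $ j" and cap: "\<forall>j. (\<Sum>t<n. x t $ j) \<le> real n * d $ j"
    and ux: "\<forall>t<n. 0 < snd (\<omega> t) \<bullet> x t" by auto
  have each: "fst (\<omega> t) * ln (snd (\<omega> t) \<bullet> x t) \<le>
      fst (\<omega> t) * ln (snd (\<omega> t) \<bullet> sel ps (fst (\<omega> t)) (snd (\<omega> t))) + ps \<bullet> x t - fst (\<omega> t)"
    if t: "t < n" for t
  proof -
    have z: "\<omega> t \<in> S'" using om t by simp
    show ?thesis
      by (rule oc_dual[OF Inv_pos[OF inv] _ oc_sel[OF inv z]])
        (use S'_w[OF z] wl_pos x0 t ux in auto)
  qed
  have "(\<Sum>t<n. fst (\<omega> t) * ln (snd (\<omega> t) \<bullet> x t)) \<le> (\<Sum>t<n. fst (\<omega> t) * ln (snd (\<omega> t) \<bullet> sel ps (fst (\<omega> t)) (snd (\<omega> t))) + ps \<bullet> x t - fst (\<omega> t))"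
    by (rule sum_mono) (use each in auto)
  also have "\<dots> = (\<Sum>t<n. fst (\<omega> t) * ln (snd (\<omega> t) \<bullet> sel ps (fst (\<omega> t)) (snd (\<omega> t))) - fst (\<omega> t)) + (\<Sum>t<n. ps \<bullet> x t)"
    by (rule sum_rearr1)
  also have "(\<Sum>t<n. ps \<bullet> x t) \<le> (\<Sum>t<n. ps \<bullet> d)"
  proof -
    have "(\<Sum>t<n. ps \<bullet> x t) = (\<Sum>j\<in>UNIV. ps $ j * (\<Sum>t<n. x t $ j))"
      by (rule sum_inner_swap)
    also have "\<dots> \<le> (\<Sum>j\<in>UNIV. ps $ j * (real n * d $ j))"
      using cap Inv_pos[OF inv] by (intro sum_mono mult_left_mono) (auto simp: less_imp_le)
    also have "\<dots> = (\<Sum>t<n. ps \<bullet> d)" by (rule sum_inner_const)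
    finally show ?thesis .
  qed
  also have "(\<Sum>t<n. fst (\<omega> t) * ln (snd (\<omega> t) \<bullet> sel ps (fst (\<omega> t)) (snd (\<omega> t))) - fst (\<omega> t)) + (\<Sum>t<n. ps \<bullet> d)
     = (\<Sum>t<n. gf ps (\<omega> t))" unfolding gf_def by (rule sum_rearr1[symmetric])
  finally show "(\<Sum>t<n. fst (\<omega> t) * ln (snd (\<omega> t) \<bullet> x t)) \<le> (\<Sum>t<n. gf ps (\<omega> t))" by simp
qed

end


context dyn begin

lemma online_eq:
  "online_util (rp_alloc sel p1 d g \<omega>) n \<omega> =
   (\<Sum>t<n. gf (rp_price sel p1 d g \<omega> t) (\<omega> t) - rp_price sel p1 d g \<omega> t \<bullet> d + fst (\<omega> t))"
  unfolding online_util_def gf_def rp_alloc_def by simp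

lemma tel_bound:
  assumes g: "0 < g" "g \<le> g0" and om: "\<forall>s<n. \<omega> s \<in> S'"
  shows "(\<Sum>t<n. rp_price sel p1 d g \<omega> t \<bullet> d - fst (\<omega> t))
         \<le> mm * (U^2 / (2 * g) + g / 2 * (real n * (dmax + wu * K)^2))"
proof -
  let ?p = "rp_price sel p1 d g \<omega>"
  let ?x = "rp_alloc sel p1 d g \<omega>"
  define B where "B = dmax + wu * K"
  have "(\<Sum>t<n. ?p t \<bullet> d - fst (\<omega> t)) \<le> (\<Sum>t<n. ?p t \<bullet> d - ?p t \<bullet> ?x t)"
  proof (rule sum_mono)
    fix t assume "t \<in> {..<n}"
    then have "\<forall>s\<le>t. \<omega> s \<in> S'" using om by auto
    then have "?p t \<bullet> ?x t \<le> fst (\<omega> t)" using oc_budget[OF alloc_oc[OF g]] by blast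
    then show "?p t \<bullet> d - fst (\<omega> t) \<le> ?p t \<bullet> d - ?p t \<bullet> ?x t" by simp
  qed
  also have "\<dots> = (\<Sum>t<n. \<Sum>j\<in>UNIV. ?p t $ j * (d $ j - ?x t $ j))"
    by (simp add: inner_vec_def sum_subtractf[symmetric] algebra_simps)
  also have "\<dots> = (\<Sum>j\<in>UNIV. \<Sum>t<n. ?p t $ j * (d $ j - ?x t $ j))" by (rule sum.swap)
  also have "\<dots> \<le> (\<Sum>j\<in>(UNIV::'m set). U^2 / (2 * g) + g / 2 * (real n * B^2))"
  proof (rule sum_mono)
    fix j :: 'm
    have rec: "?p (Suc t) $ j = ?p t $ j - g * (d $ j - ?x t $ j)" for t
      by (simp add: rp_alloc_def)
    have "(\<Sum>t<n. ?p t $ j * (d $ j - ?x t $ j)) =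
        (?p 0 $ j ^ 2 - ?p n $ j ^ 2) / (2 * g) + g / 2 * (\<Sum>t<n. (d $ j - ?x t $ j) ^ 2)"
      by (rule telescope_sq[where P="\<lambda>t. ?p t $ j" and e="\<lambda>t. d $ j - ?x t $ j", OF rec]) (use g in simp)
    also have "(?p 0 $ j ^ 2 - ?p n $ j ^ 2) / (2 * g) \<le> U^2 / (2 * g)"
    proof -
      have "p1 $ j ^ 2 \<le> U ^ 2" using p1_pos Inv_U[OF Inv_p1, of j] by (intro power_mono) (auto simp: less_imp_le)
      moreover have "0 \<le> ?p n $ j ^ 2" by simp
      ultimately have "p1 $ j ^ 2 - ?p n $ j ^ 2 \<le> U^2" by linarith
      then have "?p 0 $ j ^ 2 - ?p n $ j ^ 2 \<le> U^2" by simp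
      then show ?thesis using g by (intro divide_right_mono) auto
    qed
    also have "(\<Sum>t<n. (d $ j - ?x t $ j) ^ 2) \<le> (\<Sum>t<n. B^2)"
    proof (rule sum_mono)
      fix t assume "t \<in> {..<n}"
      then have "\<forall>s\<le>t. \<omega> s \<in> S'" using om by auto
      from alloc_bounds[OF g this, of j] have xb: "0 \<le> ?x t $ j" "?x t $ j \<le> wu * K" by auto
      have "\<bar>d $ j - ?x t $ j\<bar> \<le> B" unfolding B_def using xb d_pos[rule_format, of j] dmax_ge[of j] by linarith
      then have "\<bar>d $ j - ?x t $ j\<bar> ^ 2 \<le> B ^ 2" by (intro power_mono) auto
      then show "(d $ j - ?x t $ j) ^ 2 \<le> B ^ 2" by simp
    qed
    then have "g / 2 * (\<Sum>t<n. (d $ j - ?x t $ j) ^ 2) \<le> g / 2 * (real n * B^2)"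
      using g by (intro mult_left_mono) auto
    finally show "(\<Sum>t<n. ?p t $ j * (d $ j - ?x t $ j)) \<le> U^2 / (2 * g) + g / 2 * (real n * B^2)"
      by simp
  qed
  also have "\<dots> = mm * (U^2 / (2 * g) + g / 2 * (real n * B^2))" unfolding mm_def by simp
  finally show ?thesis unfolding B_def .
qed

lemma viol_bound:
  assumes g: "0 < g" "g \<le> g0" and om: "\<forall>s<n. \<omega> s \<in> S'"
  shows "norm (violation_vec d (rp_alloc sel p1 d g \<omega>) n) \<le> mm * U / g"
proof -
  let ?p = "rp_price sel p1 d g \<omega>"
  let ?x = "rp_alloc sel p1 d g \<omega>"
  have invn: "Inv (?p n)" by (rule price_inv[OF g om])
  have "norm (violation_vec d ?x n) \<le> (\<Sum>j\<in>UNIV. \<bar>violation_vec d ?x n $ j\<bar>)" by (rule norm_le_l1_cart)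
  also have "\<dots> \<le> (\<Sum>j\<in>(UNIV::'m set). U / g)"
  proof (rule sum_mono)
    fix j :: 'm
    have ps: "?p n $ j = p1 $ j - g * (\<Sum>t<n. d $ j - ?x t $ j)" by (rule price_sum)
    have "(\<Sum>t<n. ?x t $ j) - real n * d $ j = - (\<Sum>t<n. d $ j - ?x t $ j)"
      by (simp add: sum_subtractf)
    also have "\<dots> = (?p n $ j - p1 $ j) / g" using ps g by (simp add: field_simps)
    finally have eq: "(\<Sum>t<n. ?x t $ j) - real n * d $ j = (?p n $ j - p1 $ j) / g" .
    have "\<bar>?p n $ j - p1 $ j\<bar> \<le> U"
      using Inv_pos[OF invn] Inv_U[OF invn, of j] p1_pos Inv_U[OF Inv_p1, of j]
      by (smt (verit))
    then have "\<bar>(?p n $ j - p1 $ j) / g\<bar> \<le> U / g" using g by (simp add: divide_right_mono)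
    moreover have "\<bar>violation_vec d ?x n $ j\<bar> \<le> \<bar>(\<Sum>t<n. ?x t $ j) - real n * d $ j\<bar>"
      unfolding violation_vec_def by simp
    ultimately show "\<bar>violation_vec d ?x n $ j\<bar> \<le> U / g" using eq by simp
  qed
  also have "\<dots> = mm * U / g" unfolding mm_def by simp
  finally show ?thesis .
qed

end


lemma pair_borel_meas:
  fixes f :: "'a \<Rightarrow> 'b::second_countable_topology" and h :: "'a \<Rightarrow> 'c::second_countable_topology"
  assumes "f \<in> borel_measurable M" "h \<in> borel_measurable M"
  shows "(\<lambda>x. (f x, h x)) \<in> borel_measurable M"
  using measurable_Pair[OF assms] unfolding borel_prod .

lemma sel_comp[measurable (raw)]:
  fixes sel :: "real^'m \<Rightarrow> real \<Rightarrow> real^'m \<Rightarrow> real^'m"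
  assumes sel: "admissible_rule sel"
    and f: "f \<in> borel_measurable M" and h: "h \<in> borel_measurable M" and k: "k \<in> borel_measurable M"
  shows "(\<lambda>x. sel (f x) (h x) (k x)) \<in> borel_measurable M"
proof -
  have sm: "(\<lambda>z. sel (fst z) (fst (snd z)) (snd (snd z))) \<in> borel_measurable borel"
    using sel unfolding admissible_rule_def by blast
  have "(\<lambda>x. (f x, h x, k x)) \<in> borel_measurable M"
    by (intro pair_borel_meas f h k)
  from measurable_compose[OF this sm] show ?thesis by simp
qed

lemma comp_D_meas:
  assumes "sets D = sets (borel :: ('a::topological_space) measure)" "i \<in> I"
  shows "(\<lambda>\<omega>. \<omega> i) \<in> borel_measurable (PiM I (\<lambda>_. D))"
proof -
  have "(\<lambda>\<omega>. \<omega> i) \<in> PiM I (\<lambda>_. D) \<rightarrow>\<^sub>M D" using assms(2) by (rule measurable_component_singleton)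
  then show ?thesis using measurable_cong_sets[OF refl assms(1)] by blast
qed

lemma price_meas:
  fixes D :: "(real \<times> (real^'m)) measure"
  assumes sel: "admissible_rule sel" and Ds: "sets D = sets borel" and I: "{..<t} \<subseteq> I"
  shows "(\<lambda>\<omega>. rp_price sel p1 d g \<omega> t) \<in> borel_measurable (PiM I (\<lambda>_. D))"
  using I
proof (induction t)
  case 0
  then show ?case by simp
next
  case (Suc t)
  have "{..<t} \<subseteq> I" using Suc.prems by auto
  then have IH: "(\<lambda>\<omega>. rp_price sel p1 d g \<omega> t) \<in> borel_measurable (PiM I (\<lambda>_. D))" by (rule Suc.IH)
  have tI: "t \<in> I" using Suc.prems by auto
  have c: "(\<lambda>\<omega>. \<omega> t) \<in> borel_measurable (PiM I (\<lambda>_. D))" by (rule comp_D_meas[OF Ds tI])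
  have c1: "(\<lambda>\<omega>. fst (\<omega> t)) \<in> borel_measurable (PiM I (\<lambda>_. D))"
    using measurable_compose[OF c borel_measurable_continuous_onI[OF continuous_on_fst[OF continuous_on_id]]] by simp
  have c2: "(\<lambda>\<omega>. snd (\<omega> t)) \<in> borel_measurable (PiM I (\<lambda>_. D))"
    using measurable_compose[OF c borel_measurable_continuous_onI[OF continuous_on_snd[OF continuous_on_id]]] by simp
  have "(\<lambda>\<omega>. sel (rp_price sel p1 d g \<omega> t) (fst (\<omega> t)) (snd (\<omega> t))) \<in> borel_measurable (PiM I (\<lambda>_. D))"
    by (rule sel_comp[OF sel IH c1 c2])
  then show ?case using IH by simp
qed

lemma price_dep:
  "(\<forall>s<t. \<omega> s = \<omega>' s) \<Longrightarrow> rp_price sel p1 d g \<omega> t = rp_price sel p1 d g \<omega>' t"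
  by (induction t) auto



lemma fp_meas:
  fixes f :: "real^'m \<Rightarrow> real \<times> (real^'m) \<Rightarrow> real" and D :: "(real \<times> (real^'m)) measure"
  assumes fm: "(\<lambda>pz. f (fst pz) (snd pz)) \<in> borel_measurable (borel \<Otimes>\<^sub>M D)"
    and \<phi>m: "\<phi> \<in> borel_measurable M" and \<psi>m: "\<psi> \<in> M \<rightarrow>\<^sub>M D"
  shows "(\<lambda>x. f (\<phi> x) (\<psi> x)) \<in> borel_measurable M"
  using measurable_compose[OF measurable_Pair[OF \<phi>m \<psi>m] fm] by simp

lemma integral_abs_le_const:
  fixes g :: "'a \<Rightarrow> real"
  assumes P: "prob_space M" and gm: "g \<in> borel_measurable M" and b: "AE z in M. \<bar>g z\<bar> \<le> B"
  shows "integrable M g" "\<bar>integral\<^sup>L M g\<bar> \<le> B"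
proof -
  interpret prob_space M by (rule P)
  show ig: "integrable M g" by (rule integrable_const_bound[where B=B]) (use b gm in auto)
  have "integral\<^sup>L M g \<le> integral\<^sup>L M (\<lambda>_. B)"
    by (rule integral_mono_AE[OF ig]) (use b in auto)
  moreover have "integral\<^sup>L M (\<lambda>_. - B) \<le> integral\<^sup>L M g"
    by (rule integral_mono_AE[OF _ ig]) (use b in auto)
  ultimately show "\<bar>integral\<^sup>L M g\<bar> \<le> B" by (simp add: prob_space)
qed

lemma indep_int:
  fixes D :: "(real \<times> (real^'m)) measure" and \<phi> :: "(nat \<Rightarrow> real \<times> (real^'m)) \<Rightarrow> real^'m"
    and f :: "real^'m \<Rightarrow> real \<times> (real^'m) \<Rightarrow> real"
  assumes D: "prob_space D" and t: "t < n"
    and dep: "\<And>\<omega> y. \<phi> (fun_upd \<omega> t y) = \<phi> \<omega>"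
    and \<phi>m: "\<phi> \<in> borel_measurable (PiM {..<n} (\<lambda>_. D))"
    and fm: "(\<lambda>pz. f (fst pz) (snd pz)) \<in> borel_measurable (borel \<Otimes>\<^sub>M D)"
    and bnd: "AE \<omega> in PiM {..<n} (\<lambda>_. D). \<bar>f (\<phi> \<omega>) (\<omega> t)\<bar> \<le> B"
  shows "integrable (PiM {..<n} (\<lambda>_. D)) (\<lambda>\<omega>. f (\<phi> \<omega>) (\<omega> t))"
    "(\<integral>\<omega>. f (\<phi> \<omega>) (\<omega> t) \<partial>PiM {..<n} (\<lambda>_. D)) = (\<integral>x. (\<integral>z. f (\<phi> x) z \<partial>D) \<partial>PiM ({..<n} - {t}) (\<lambda>_. D))"
proof -
  interpret D: prob_space D by (rule D)
  interpret product_sigma_finite "\<lambda>_. D"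
    by (simp add: product_sigma_finite_def D.sigma_finite_measure_axioms)
  have PS: "prob_space (PiM {..<n} (\<lambda>_. D))" by (rule prob_space_PiM) (use D in auto)
  have Fm: "(\<lambda>\<omega>. f (\<phi> \<omega>) (\<omega> t)) \<in> borel_measurable (PiM {..<n} (\<lambda>_. D))"
    by (rule fp_meas[OF fm \<phi>m]) (rule measurable_component_singleton, use t in simp)
  show ig: "integrable (PiM {..<n} (\<lambda>_. D)) (\<lambda>\<omega>. f (\<phi> \<omega>) (\<omega> t))"
    by (rule integral_abs_le_const(1)[OF PS Fm bnd])
  have ins: "{..<n} = insert t ({..<n} - {t})" using t by auto
  have ig': "integrable (PiM (insert t ({..<n} - {t})) (\<lambda>_. D)) (\<lambda>\<omega>. f (\<phi> \<omega>) (\<omega> t))"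
    using ig ins by simp
  have "(\<integral>\<omega>. f (\<phi> \<omega>) (\<omega> t) \<partial>PiM {..<n} (\<lambda>_. D)) = (\<integral>\<omega>. f (\<phi> \<omega>) (\<omega> t) \<partial>PiM (insert t ({..<n} - {t})) (\<lambda>_. D))"
    using ins by simp
  also have "\<dots> = (\<integral>x. (\<integral>y. f (\<phi> (x(t := y))) ((x(t := y)) t) \<partial>D) \<partial>PiM ({..<n} - {t}) (\<lambda>_. D))"
    by (rule product_integral_insert[OF _ _ ig']) auto
  also have "\<dots> = (\<integral>x. (\<integral>z. f (\<phi> x) z \<partial>D) \<partial>PiM ({..<n} - {t}) (\<lambda>_. D))"
    by (simp add: dep)
  finally show "(\<integral>\<omega>. f (\<phi> \<omega>) (\<omega> t) \<partial>PiM {..<n} (\<lambda>_. D)) = (\<integral>x. (\<integral>z. f (\<phi> x) z \<partial>D) \<partial>PiM ({..<n} - {t}) (\<lambda>_. D))" .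
qed

lemma indep_lower:
  fixes D :: "(real \<times> (real^'m)) measure" and \<phi> :: "(nat \<Rightarrow> real \<times> (real^'m)) \<Rightarrow> real^'m"
    and f :: "real^'m \<Rightarrow> real \<times> (real^'m) \<Rightarrow> real"
  assumes D: "prob_space D" and t: "t < n"
    and dep: "\<And>\<omega> y. \<phi> (fun_upd \<omega> t y) = \<phi> \<omega>"
    and \<phi>m: "\<phi> \<in> borel_measurable (PiM {..<n} (\<lambda>_. D))"
    and \<phi>m': "\<phi> \<in> borel_measurable (PiM ({..<n} - {t}) (\<lambda>_. D))"
    and fm: "(\<lambda>pz. f (fst pz) (snd pz)) \<in> borel_measurable (borel \<Otimes>\<^sub>M D)"
    and bnd: "AE \<omega> in PiM {..<n} (\<lambda>_. D). \<bar>f (\<phi> \<omega>) (\<omega> t)\<bar> \<le> B"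
    and inP: "AE x in PiM ({..<n} - {t}) (\<lambda>_. D). \<phi> x \<in> P"
    and fb: "\<And>p. p \<in> P \<Longrightarrow> AE z in D. \<bar>f p z\<bar> \<le> B"
    and lo: "\<And>p. p \<in> P \<Longrightarrow> c \<le> (\<integral>z. f p z \<partial>D)"
  shows "c \<le> (\<integral>\<omega>. f (\<phi> \<omega>) (\<omega> t) \<partial>PiM {..<n} (\<lambda>_. D))"
proof -
  interpret D: prob_space D by (rule D)
  let ?N = "PiM ({..<n} - {t}) (\<lambda>_. D)"
  have PN: "prob_space ?N" by (rule prob_space_PiM) (use D in auto)
  interpret N: prob_space ?N by (rule PN)
  have Hm: "(\<lambda>x. \<integral>z. f (\<phi> x) z \<partial>D) \<in> borel_measurable ?N"
  proof (rule D.borel_measurable_lebesgue_integral)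
    have "(\<lambda>xz. f (\<phi> (fst xz)) (snd xz)) \<in> borel_measurable (?N \<Otimes>\<^sub>M D)"
      by (rule fp_meas[OF fm]) (use \<phi>m' in auto)
    then show "(\<lambda>(x, z). f (\<phi> x) z) \<in> borel_measurable (?N \<Otimes>\<^sub>M D)" by (simp add: case_prod_beta')
  qed
  have fpm: "(\<lambda>z. f p z) \<in> borel_measurable D" for p
    by (rule fp_meas[OF fm]) auto
  have Hb: "AE x in ?N. \<bar>\<integral>z. f (\<phi> x) z \<partial>D\<bar> \<le> B"
    using inP by eventually_elim (rule integral_abs_le_const(2)[OF D fpm fb])
  have iH: "integrable ?N (\<lambda>x. \<integral>z. f (\<phi> x) z \<partial>D)"
    by (rule integral_abs_le_const(1)[OF PN Hm Hb])
  have "c = (\<integral>x. c \<partial>?N)" by (simp add: N.prob_space)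
  also have "\<dots> \<le> (\<integral>x. (\<integral>z. f (\<phi> x) z \<partial>D) \<partial>?N)"
    by (rule integral_mono_AE[OF _ iH]) (use inP lo in auto)
  also have "\<dots> = (\<integral>\<omega>. f (\<phi> \<omega>) (\<omega> t) \<partial>PiM {..<n} (\<lambda>_. D))"
    by (rule indep_int(2)[OF D t dep \<phi>m fm bnd, symmetric])
  finally show ?thesis .
qed



lemma gf_meas:
  fixes D :: "(real \<times> (real^'m)) measure" and sel :: "real^'m \<Rightarrow> real \<Rightarrow> real^'m \<Rightarrow> real^'m"
  assumes sel: "admissible_rule sel" and Ds: "sets D = sets borel"
  shows "(\<lambda>pz. fst (snd pz) * ln (snd (snd pz) \<bullet> sel (fst pz) (fst (snd pz)) (snd (snd pz))) + fst pz \<bullet> d - fst (snd pz))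
          \<in> borel_measurable (borel \<Otimes>\<^sub>M D)"
proof -
  have s: "sets (borel \<Otimes>\<^sub>M D) = sets (borel :: ((real^'m) \<times> (real \<times> (real^'m))) measure)"
  proof -
    have "sets (borel \<Otimes>\<^sub>M D) = sets ((borel :: (real^'m) measure) \<Otimes>\<^sub>M (borel :: (real \<times> (real^'m)) measure))"
      by (rule sets_pair_measure_cong[OF refl Ds])
    also have "\<dots> = sets (borel :: ((real^'m) \<times> (real \<times> (real^'m))) measure)" by (simp only: borel_prod)
    finally show ?thesis .
  qed
  have "(\<lambda>pz. fst (snd pz) * ln (snd (snd pz) \<bullet> sel (fst pz) (fst (snd pz)) (snd (snd pz))) + fst pz \<bullet> d - fst (snd pz))
          \<in> borel_measurable (borel :: ((real^'m) \<times> (real \<times> (real^'m))) measure)"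
  proof -
    have m1: "(\<lambda>pz::(real^'m) \<times> (real \<times> (real^'m)). fst pz) \<in> borel_measurable borel"
      by (intro borel_measurable_continuous_onI continuous_intros)
    have m2: "(\<lambda>pz::(real^'m) \<times> (real \<times> (real^'m)). fst (snd pz)) \<in> borel_measurable borel"
      by (intro borel_measurable_continuous_onI continuous_intros)
    have m3: "(\<lambda>pz::(real^'m) \<times> (real \<times> (real^'m)). snd (snd pz)) \<in> borel_measurable borel"
      by (intro borel_measurable_continuous_onI continuous_intros)
    have ms: "(\<lambda>pz::(real^'m) \<times> (real \<times> (real^'m)). sel (fst pz) (fst (snd pz)) (snd (snd pz))) \<in> borel_measurable borel"
      by (rule sel_comp[OF sel m1 m2 m3])
    show ?thesis using m1 m2 m3 ms by measurable
  qed
  then show ?thesis using measurable_cong_sets[OF s refl] by blast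
qed

lemma integral_le_const_AE:
  fixes f :: "'a \<Rightarrow> real"
  assumes P: "prob_space M" and b: "AE x in M. f x \<le> c" and c: "0 \<le> c"
  shows "integral\<^sup>L M f \<le> c"
proof (cases "integrable M f")
  case True
  interpret prob_space M by (rule P)
  have "integral\<^sup>L M f \<le> integral\<^sup>L M (\<lambda>_. c)" by (rule integral_mono_AE[OF True]) (use b in auto)
  then show ?thesis by (simp add: prob_space)
next
  case False
  then show ?thesis using c by (simp add: not_integrable_integral_eq)
qed



context dyn begin

lemma AE_all_S:
  fixes D :: "(real \<times> (real^'m)) measure"
  assumes D: "prob_space D" and S: "AE z in D. z \<in> S'" and I: "finite I"
  shows "AE \<omega> in PiM I (\<lambda>_. D). \<forall>s\<in>I. \<omega> s \<in> S'"
  using I by (intro AE_finite_allI AE_PiM_component[where M="\<lambda>_. D"]) (use D S in auto)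

lemma viol_int:
  fixes D :: "(real \<times> (real^'m)) measure"
  assumes D: "prob_space D" and S: "AE z in D. z \<in> S'" and g: "0 < g" "g \<le> g0"
  shows "rp_violation D sel p1 d g n \<le> mm * U / g"
  unfolding rp_violation_def
proof (rule integral_le_const_AE)
  show "prob_space (PiM {..<n} (\<lambda>_. D))" by (rule prob_space_PiM) (use D in auto)
  show "0 \<le> mm * U / g" using mm_ge1 U_pos g by simp
  show "AE \<omega> in PiM {..<n} (\<lambda>_. D). norm (violation_vec d (rp_alloc sel p1 d g \<omega>) n) \<le> mm * U / g"
    using AE_all_S[OF D S finite_lessThan[of n]] by eventually_elim (rule viol_bound[OF g], auto)
qed

lemma gf_fm:
  fixes D :: "(real \<times> (real^'m)) measure"
  assumes sel: "admissible_rule sel" and Ds: "sets D = sets borel"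
  shows "(\<lambda>pz. gf (fst pz) (snd pz)) \<in> borel_measurable (borel \<Otimes>\<^sub>M D)"
  unfolding gf_def using gf_meas[OF sel Ds, of d] .

end

context dyn begin

lemma regret_int:
  fixes D :: "(real \<times> (real^'m)) measure"
  assumes D: "prob_space D" and Ds: "sets D = sets borel" and sel: "admissible_rule sel"
    and S: "AE z in D. z \<in> S'" and g: "0 < g" "g \<le> g0" and eps: "0 < \<epsilon>"
  shows "rp_regret D sel p1 d g n \<le> real n * \<epsilon> + mm * (U^2 / (2 * g) + g / 2 * (real n * (dmax + wu * K)^2))"
proof -
  interpret D: prob_space D by (rule D)
  let ?\<Omega> = "PiM {..<n} (\<lambda>_. D)"
  let ?p = "rp_price sel p1 d g"
  define Ctel where "Ctel = mm * (U^2 / (2 * g) + g / 2 * (real n * (dmax + wu * K)^2))"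
  have Ctel0: "0 \<le> Ctel" unfolding Ctel_def using mm_ge1 g by simp
  have P\<Omega>: "prob_space ?\<Omega>" by (rule prob_space_PiM) (use D in auto)
  interpret PO: prob_space ?\<Omega> by (rule P\<Omega>)
  have fm: "(\<lambda>pz. gf (fst pz) (snd pz)) \<in> borel_measurable (borel \<Otimes>\<^sub>M D)" by (rule gf_fm[OF sel Ds])
  have gfm: "(\<lambda>z. gf p z) \<in> borel_measurable D" for p :: "real^'m"
    by (rule fp_meas[OF fm]) auto
  define PI where "PI = {p :: real^'m. Inv p}"
  define G where "G p = (\<integral>z. gf p z \<partial>D)" for p :: "real^'m"
  have fb: "AE z in D. \<bar>gf p z\<bar> \<le> Mg" if "p \<in> PI" for p :: "real^'m"
    using S by eventually_elim (use that gf_bound PI_def in auto)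
  have Gb: "\<bar>G p\<bar> \<le> Mg" if "p \<in> PI" for p :: "real^'m"
    unfolding G_def by (rule integral_abs_le_const(2)[OF D gfm fb[OF that]])
  have PIne: "PI \<noteq> {}" using Inv_p1 PI_def by auto
  have bdd: "bdd_below (G ` PI)"
  proof (rule bdd_belowI[where m="- Mg"])
    fix v assume "v \<in> G ` PI"
    then obtain p where "p \<in> PI" "v = G p" by blast
    then show "- Mg \<le> v" using Gb[of p] by linarith
  qed
  have "Inf (G ` PI) < Inf (G ` PI) + \<epsilon>" using eps by simp
  then obtain ps where ps: "ps \<in> PI" "G ps < Inf (G ` PI) + \<epsilon>"
    using cInf_lessD[of "G ` PI"] PIne by blast
  have Glow: "G ps - \<epsilon> \<le> G p" if "p \<in> PI" for p :: "real^'m"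
  proof -
    have "Inf (G ` PI) \<le> G p" using bdd that by (intro cInf_lower) auto
    then show ?thesis using ps by simp
  qed
  have invps: "Inv ps" using ps PI_def by simp
  have AEall: "AE \<omega> in ?\<Omega>. \<forall>s\<in>{..<n}. \<omega> s \<in> S'" by (rule AE_all_S[OF D S]) simp
  have I1: "integrable ?\<Omega> (\<lambda>\<omega>. gf ps (\<omega> t))" "(\<integral>\<omega>. gf ps (\<omega> t) \<partial>?\<Omega>) = G ps" if t: "t < n" for t
  proof -
    have bnd: "AE \<omega> in ?\<Omega>. \<bar>gf ps (\<omega> t)\<bar> \<le> Mg"
      using AEall by eventually_elim (use t gf_bound[OF invps] in auto)
    have dep0: "\<And>\<omega> y. (\<lambda>_. ps) (fun_upd \<omega> t y) = (\<lambda>_. ps) \<omega>" by simp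
    have m0: "(\<lambda>_. ps) \<in> borel_measurable ?\<Omega>" by simp
    show "integrable ?\<Omega> (\<lambda>\<omega>. gf ps (\<omega> t))"
      using indep_int(1)[where \<phi>="\<lambda>_. ps" and f=gf, OF D t dep0 m0 fm] bnd by simp
    have "(\<integral>\<omega>. gf ps (\<omega> t) \<partial>?\<Omega>) = (\<integral>x. G ps \<partial>PiM ({..<n} - {t}) (\<lambda>_. D))"
      using indep_int(2)[where \<phi>="\<lambda>_. ps" and f=gf, OF D t dep0 m0 fm] bnd unfolding G_def by simp
    also have "\<dots> = G ps"
    proof -
      interpret N: prob_space "PiM ({..<n} - {t}) (\<lambda>_. D)" by (rule prob_space_PiM) (use D in auto)
      show ?thesis by (simp add: N.prob_space)
    qed
    finally show "(\<integral>\<omega>. gf ps (\<omega> t) \<partial>?\<Omega>) = G ps" .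
  qed
  have I2: "integrable ?\<Omega> (\<lambda>\<omega>. gf (?p \<omega> t) (\<omega> t))" "G ps - \<epsilon> \<le> (\<integral>\<omega>. gf (?p \<omega> t) (\<omega> t) \<partial>?\<Omega>)"
    if t: "t < n" for t
  proof -
    have dep: "\<And>\<omega> y. ?p (fun_upd \<omega> t y) t = ?p \<omega> t" by (rule price_dep) simp
    have m1: "(\<lambda>\<omega>. ?p \<omega> t) \<in> borel_measurable ?\<Omega>" by (rule price_meas[OF sel Ds]) (use t in auto)
    have m2: "(\<lambda>\<omega>. ?p \<omega> t) \<in> borel_measurable (PiM ({..<n} - {t}) (\<lambda>_. D))" by (rule price_meas[OF sel Ds]) (use t in auto)
    have bnd: "AE \<omega> in ?\<Omega>. \<bar>gf (?p \<omega> t) (\<omega> t)\<bar> \<le> Mg"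
      using AEall
    proof eventually_elim
      case (elim \<omega>)
      have "Inv (?p \<omega> t)" by (rule price_inv[OF g]) (use elim t in auto)
      then show ?case using gf_bound elim t by auto
    qed
    have fin: "finite ({..<n} - {t})" by simp
    have inP: "AE x in PiM ({..<n} - {t}) (\<lambda>_. D). ?p x t \<in> PI"
      using AE_all_S[OF D S fin]
    proof eventually_elim
      case (elim x)
      have "Inv (?p x t)" by (rule price_inv[OF g]) (use elim t in auto)
      then show ?case unfolding PI_def by simp
    qed
    show "integrable ?\<Omega> (\<lambda>\<omega>. gf (?p \<omega> t) (\<omega> t))" by (rule indep_int(1)[OF D t dep m1 fm bnd])
    show "G ps - \<epsilon> \<le> (\<integral>\<omega>. gf (?p \<omega> t) (\<omega> t) \<partial>?\<Omega>)"
      by (rule indep_lower[OF D t dep m1 m2 fm bnd inP fb]) (use Glow G_def in auto)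
  qed
  define R where "R \<omega> = (\<Sum>t<n. gf ps (\<omega> t) - gf (?p \<omega> t) (\<omega> t)) + Ctel" for \<omega>
  have iR: "integrable ?\<Omega> R" unfolding R_def
    by (intro Bochner_Integration.integrable_add Bochner_Integration.integrable_sum Bochner_Integration.integrable_diff I1 I2 PO.integrable_const) auto
  have intR: "integral\<^sup>L ?\<Omega> R \<le> real n * \<epsilon> + Ctel"
  proof -
    have idiff: "integrable ?\<Omega> (\<lambda>\<omega>. gf ps (\<omega> t) - gf (?p \<omega> t) (\<omega> t))" if "t < n" for t
      using I1(1)[OF that] I2(1)[OF that] by (rule Bochner_Integration.integrable_diff)
    have isum: "integrable ?\<Omega> (\<lambda>\<omega>. \<Sum>t<n. gf ps (\<omega> t) - gf (?p \<omega> t) (\<omega> t))"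
      by (rule Bochner_Integration.integrable_sum) (use idiff in auto)
    have e1: "integral\<^sup>L ?\<Omega> R = (\<integral>\<omega>. (\<Sum>t<n. gf ps (\<omega> t) - gf (?p \<omega> t) (\<omega> t)) \<partial>?\<Omega>) + Ctel"
      unfolding R_def by (subst Bochner_Integration.integral_add[OF isum PO.integrable_const]) (simp add: PO.prob_space)
    have e2: "(\<integral>\<omega>. (\<Sum>t<n. gf ps (\<omega> t) - gf (?p \<omega> t) (\<omega> t)) \<partial>?\<Omega>)
        = (\<Sum>t<n. (\<integral>\<omega>. gf ps (\<omega> t) - gf (?p \<omega> t) (\<omega> t) \<partial>?\<Omega>))"
      by (rule Bochner_Integration.integral_sum) (use idiff in auto)
    have e3: "(\<Sum>t<n. (\<integral>\<omega>. gf ps (\<omega> t) - gf (?p \<omega> t) (\<omega> t) \<partial>?\<Omega>)) \<le> (\<Sum>t<n. \<epsilon>)"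
    proof (rule sum_mono)
      fix t assume "t \<in> {..<n}"
      then have t: "t < n" by simp
      have "(\<integral>\<omega>. gf ps (\<omega> t) - gf (?p \<omega> t) (\<omega> t) \<partial>?\<Omega>) = (\<integral>\<omega>. gf ps (\<omega> t) \<partial>?\<Omega>) - (\<integral>\<omega>. gf (?p \<omega> t) (\<omega> t) \<partial>?\<Omega>)"
        by (rule Bochner_Integration.integral_diff[OF I1(1)[OF t] I2(1)[OF t]])
      then show "(\<integral>\<omega>. gf ps (\<omega> t) - gf (?p \<omega> t) (\<omega> t) \<partial>?\<Omega>) \<le> \<epsilon>"
        using I1(2)[OF t] I2(2)[OF t] by linarith
    qed
    have "(\<Sum>t<n. \<epsilon>) = real n * \<epsilon>" by simp
    then show ?thesis using e1 e2 e3 by linarith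
  qed
  have pw: "AE \<omega> in ?\<Omega>. offline_opt d n \<omega> - online_util (rp_alloc sel p1 d g \<omega>) n \<omega> \<le> R \<omega>"
    using AEall
  proof eventually_elim
    case (elim \<omega>)
    then have om: "\<forall>s<n. \<omega> s \<in> S'" by auto
    have off: "offline_opt d n \<omega> \<le> (\<Sum>t<n. gf ps (\<omega> t))" by (rule offline_le[OF om invps])
    have tel: "(\<Sum>t<n. ?p \<omega> t \<bullet> d - fst (\<omega> t)) \<le> Ctel" unfolding Ctel_def by (rule tel_bound[OF g om])
    have "online_util (rp_alloc sel p1 d g \<omega>) n \<omega> = (\<Sum>t<n. gf (?p \<omega> t) (\<omega> t) - (?p \<omega> t \<bullet> d - fst (\<omega> t)))"
      unfolding online_eq by (simp add: algebra_simps)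
    also have "\<dots> = (\<Sum>t<n. gf (?p \<omega> t) (\<omega> t)) - (\<Sum>t<n. ?p \<omega> t \<bullet> d - fst (\<omega> t))"
      by (rule sum_subtractf)
    finally have on: "online_util (rp_alloc sel p1 d g \<omega>) n \<omega> = (\<Sum>t<n. gf (?p \<omega> t) (\<omega> t)) - (\<Sum>t<n. ?p \<omega> t \<bullet> d - fst (\<omega> t))" .
    have "R \<omega> = (\<Sum>t<n. gf ps (\<omega> t)) - (\<Sum>t<n. gf (?p \<omega> t) (\<omega> t)) + Ctel"
      unfolding R_def by (simp add: sum_subtractf)
    then show ?case using off tel on by linarith
  qed
  show ?thesis
    unfolding rp_regret_def Ctel_def[symmetric]
  proof (cases "integrable ?\<Omega> (\<lambda>\<omega>. offline_opt d n \<omega> - online_util (rp_alloc sel p1 d g \<omega>) n \<omega>)")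
    case True
    have "(\<integral>\<omega>. offline_opt d n \<omega> - online_util (rp_alloc sel p1 d g \<omega>) n \<omega> \<partial>?\<Omega>) \<le> integral\<^sup>L ?\<Omega> R"
      by (rule integral_mono_AE[OF True iR pw])
    then show "(\<integral>\<omega>. offline_opt d n \<omega> - online_util (rp_alloc sel p1 d g \<omega>) n \<omega> \<partial>?\<Omega>) \<le> real n * \<epsilon> + Ctel"
      using intR by linarith
  next
    case False
    then show "(\<integral>\<omega>. offline_opt d n \<omega> - online_util (rp_alloc sel p1 d g \<omega>) n \<omega> \<partial>?\<Omega>) \<le> real n * \<epsilon> + Ctel"
      using Ctel0 eps by (simp add: not_integrable_integral_eq)
  qed
qed

end


theorem theorem3:
  fixes D :: "(real \<times> (real^'m)) measure"
    and d p1 ul uu :: "real^'m"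
    and wl wu Dbar :: real
    and sel :: "real^'m \<Rightarrow> real \<Rightarrow> real^'m \<Rightarrow> real^'m"
  assumes D_prob: "prob_space D"
    and D_sets: "sets D = sets borel"
    and d_pos: "\<forall>j. 0 < d $ j"
    and p1_pos: "\<forall>j. 0 < p1 $ j"
    and pos_prob: "\<forall>j. measure D {z \<in> space D. 0 < snd z $ j} > 0"
    and ul_pos: "\<forall>j. 0 < ul $ j"
    and wl_pos: "0 < wl"
    and support: "AE z in D. wl \<le> fst z \<and> fst z \<le> wu \<and>
                    (\<forall>j. ul $ j \<le> snd z $ j \<and> snd z $ j \<le> uu $ j)"
    and Dbar_pos: "0 < Dbar"
    and sel: "admissible_rule sel"
  shows "\<exists>C. eventually (\<lambda>n.
            rp_regret D sel p1 d (Dbar / sqrt (real n)) n \<le> C * sqrt (real n) \<and>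
            rp_violation D sel p1 d (Dbar / sqrt (real n)) n \<le> C * sqrt (real n)) sequentially"
proof -
  interpret D: prob_space D by (rule D_prob)
  have "\<exists>z. wl \<le> fst z \<and> fst z \<le> wu \<and> (\<forall>j. ul $ j \<le> snd z $ j \<and> snd z $ j \<le> uu $ j)"
  proof (rule ccontr)
    assume nz: "\<not> (\<exists>z. wl \<le> fst z \<and> fst z \<le> wu \<and> (\<forall>j. ul $ j \<le> snd z $ j \<and> snd z $ j \<le> uu $ j))"
    have "AE z in D. False" using support by (rule eventually_mono) (use nz in blast)
    then show False by (simp add: D.AE_False)
  qed
  then obtain z0 where z0: "wl \<le> fst z0" "fst z0 \<le> wu" "\<And>j. ul $ j \<le> snd z0 $ j \<and> snd z0 $ j \<le> uu $ j" by blast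
  define a where "a = Min (range (\<lambda>j. ul $ j))"
  define A where "A = Max (range (\<lambda>j. uu $ j))"
  have a_le: "a \<le> ul $ j" for j unfolding a_def by (rule Min_le) auto
  have A_ge: "uu $ j \<le> A" for j unfolding A_def by (rule Max_ge) auto
  have a_pos: "0 < a"
  proof -
    have "a \<in> range (\<lambda>j. ul $ j)" unfolding a_def by (rule Min_in) auto
    then show ?thesis using ul_pos by auto
  qed
  have a_A: "a \<le> A" using a_le[of undefined] z0(3)[of undefined] A_ge[of undefined] by linarith
  have sel_opt: "\<And>p w u. (\<exists>x. optimal_consumption p w u x) \<Longrightarrow> optimal_consumption p w u (sel p w u)"
    using sel unfolding admissible_rule_def by blast
  interpret dyn d p1 wl wu a A sel
    by unfold_locales (use d_pos p1_pos wl_pos z0 a_pos a_A sel_opt in auto)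
  have S: "AE z in D. z \<in> S'"
    using support by (rule eventually_mono) (auto simp: S'_def intro: order_trans[OF a_le] order_trans[OF _ A_ge])
  define B where "B = dmax + wu * K"
  define C1 where "C1 = mm * (U^2 / (2 * Dbar) + Dbar / 2 * B^2)"
  define Cv where "Cv = mm * U / Dbar"
  define C where "C = max Cv (C1 + 1)"
  define N0 where "N0 = nat \<lceil>(Dbar / g0)^2\<rceil> + 1"
  have ev: "\<forall>n\<ge>N0. rp_regret D sel p1 d (Dbar / sqrt (real n)) n \<le> C * sqrt (real n) \<and>
            rp_violation D sel p1 d (Dbar / sqrt (real n)) n \<le> C * sqrt (real n)"
  proof (intro allI impI)
    fix n assume n: "N0 \<le> n"
    have n1: "1 \<le> n" using n unfolding N0_def by simp
    have sn0: "0 < sqrt (real n)" using n1 by simp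
    have sn1: "1 \<le> sqrt (real n)" using n1 by simp
    have "(Dbar / g0)^2 \<le> real n"
    proof -
      have "(Dbar / g0)^2 \<le> real (nat \<lceil>(Dbar / g0)^2\<rceil>)" by linarith
      also have "\<dots> \<le> real n" using n unfolding N0_def by simp
      finally show ?thesis .
    qed
    then have "sqrt ((Dbar / g0)^2) \<le> sqrt (real n)" by (rule real_sqrt_le_mono)
    then have "Dbar / g0 \<le> sqrt (real n)" using Dbar_pos g0_pos by simp
    then have gle: "Dbar / sqrt (real n) \<le> g0" using Dbar_pos g0_pos sn0 by (simp add: field_simps)
    define g where "g = Dbar / sqrt (real n)"
    have g: "0 < g" "g \<le> g0" unfolding g_def using Dbar_pos sn0 gle by auto
    have viol: "rp_violation D sel p1 d g n \<le> mm * U / g" by (rule viol_int[OF D_prob S g])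
    have "mm * U / g = Cv * sqrt (real n)" unfolding g_def Cv_def using Dbar_pos sn0 by (simp add: field_simps)
    also have "\<dots> \<le> C * sqrt (real n)" unfolding C_def using sn0 by (intro mult_right_mono) auto
    finally have V: "rp_violation D sel p1 d g n \<le> C * sqrt (real n)" using viol by linarith
    have reg: "rp_regret D sel p1 d g n \<le> real n * (1 / real n) + mm * (U^2 / (2 * g) + g / 2 * (real n * (dmax + wu * K)^2))"
      by (rule regret_int[OF D_prob D_sets sel S g]) (use n1 in simp)
    have e1: "real n * (1 / real n) = 1" using n1 by simp
    have e2: "mm * (U^2 / (2 * g) + g / 2 * (real n * (dmax + wu * K)^2)) = C1 * sqrt (real n)"
    proof -
      have nn: "real n = sqrt (real n) * sqrt (real n)" by simp
      have "U^2 / (2 * g) = U^2 / (2 * Dbar) * sqrt (real n)" unfolding g_def using Dbar_pos sn0 by (simp add: field_simps)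
      moreover have "g / 2 * (real n * B^2) = Dbar / 2 * B^2 * sqrt (real n)"
        unfolding g_def using sn0 by (subst nn) (simp add: field_simps)
      ultimately show ?thesis unfolding C1_def B_def[symmetric] by (simp add: algebra_simps)
    qed
    have "1 + C1 * sqrt (real n) \<le> (C1 + 1) * sqrt (real n)" using sn1 by (simp add: algebra_simps)
    also have "\<dots> \<le> C * sqrt (real n)" unfolding C_def using sn0 by (intro mult_right_mono) auto
    finally have R: "rp_regret D sel p1 d g n \<le> C * sqrt (real n)" using reg e1 e2 by linarith
    show "rp_regret D sel p1 d (Dbar / sqrt (real n)) n \<le> C * sqrt (real n) \<and>
            rp_violation D sel p1 d (Dbar / sqrt (real n)) n \<le> C * sqrt (real n)"
      using R V unfolding g_def by simp
  qed
  show ?thesis by (rule exI[where x=C]) (use ev in \<open>simp add: eventually_sequentially, blast\<close>)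
qed


end
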